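(* Let $\Gamma\in\mathcal S$ with embedding $\varphi$ into $\mathbb Z^n$, and let $v_{i_1},\dots,v_{i_k}$ be vertices of $\Gamma$ spanning a connected subtree. Then $w=\sum_{j=1}^k\varphi(v_{i_j})$ is of the form $E_a-\sum_{j\in J}E_j$ or $-2E_a-\sum_{j\in J}E_j$ for some index $a$ and subset $J\subset\{1,\dots,n\}$ with $a\notin J$.
   Context: A plumbing tree is a finite tree $\Gamma$ each of whose vertices $v$ carries an integer decoration $d(v)$. $\Gamma$ is minimal if no vertex has decoration $-1$. For $n\ge 1$ let $(\mathbb Z^n,Q_n)$ be the lattice with basis $E_1,\dots,E_n$ and $Q_n(E_i,E_j)=-\delta_{ij}$, and let $K=\sum_{i=1}^n E_i$. A plumbing tree $\Gamma$ on $n$ vertices is a symplectic plumbing tree if there is a map $\varphi$ (an embedding) from its vertex set to $\mathbb Z^n$ such that: for distinct vertices $v_1,v_2$, $Q_n(\varphi(v_1),\varphi(v_2))$ is $1$ if they are adjacent and $0$ otherwise; $Q_n(\varphi(v),\varphi(v))=d(v)$ for every $v$; and $Q_n(\varphi(v),K)+Q_n(\varphi(v),\varphi(v))=-2$ for every $v$. $\mathcal S$ is the set of minimal, connected symplectic plumbing trees. *)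

theory Defs
  imports Main "HOL-Library.Function_Algebras"
begin

(* Lattice (Z^n, Q_n): vectors are functions nat => int supported on the index set {1..n}. *)
definition in_lattice :: "nat \<Rightarrow> (nat \<Rightarrow> int) \<Rightarrow> bool" where
  "in_lattice n x \<longleftrightarrow> (\<forall>i. i \<notin> {1..n} \<longrightarrow> x i = 0)"

definition Qn :: "nat \<Rightarrow> (nat \<Rightarrow> int) \<Rightarrow> (nat \<Rightarrow> int) \<Rightarrow> int" where
  "Qn n x y = - (\<Sum>i\<in>{1..n}. x i * y i)"

definition E :: "nat \<Rightarrow> (nat \<Rightarrow> int)" where
  "E i = (\<lambda>j. if j = i then 1 else 0)"

definition Kn :: "nat \<Rightarrow> (nat \<Rightarrow> int)" where
  "Kn n = (\<Sum>i\<in>{1..n}. E i)"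

definition simple_graph :: "'v set \<Rightarrow> ('v \<Rightarrow> 'v \<Rightarrow> bool) \<Rightarrow> bool" where
  "simple_graph V adj \<longleftrightarrow> finite V \<and>
     (\<forall>u v. adj u v \<longrightarrow> u \<in> V \<and> v \<in> V) \<and>
     (\<forall>u v. adj u v \<longrightarrow> adj v u) \<and> (\<forall>v. \<not> adj v v)"

definition connected_on :: "'v set \<Rightarrow> ('v \<Rightarrow> 'v \<Rightarrow> bool) \<Rightarrow> bool" where
  "connected_on S adj \<longleftrightarrow> S \<noteq> {} \<and>
     (\<forall>u\<in>S. \<forall>w\<in>S. (u, w) \<in> {(x, y). x \<in> S \<and> y \<in> S \<and> adj x y}\<^sup>*)"

definition edges :: "'v set \<Rightarrow> ('v \<Rightarrow> 'v \<Rightarrow> bool) \<Rightarrow> 'v set set" where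
  "edges V adj = {{u, v} | u v. u \<in> V \<and> v \<in> V \<and> adj u v}"

definition is_tree :: "'v set \<Rightarrow> ('v \<Rightarrow> 'v \<Rightarrow> bool) \<Rightarrow> bool" where
  "is_tree V adj \<longleftrightarrow> simple_graph V adj \<and> connected_on V adj \<and>
     card (edges V adj) = card V - 1"

definition minimal_plumbing :: "'v set \<Rightarrow> ('v \<Rightarrow> int) \<Rightarrow> bool" where
  "minimal_plumbing V d \<longleftrightarrow> (\<forall>v\<in>V. d v \<noteq> -1)"

definition symplectic_embedding ::
  "'v set \<Rightarrow> ('v \<Rightarrow> 'v \<Rightarrow> bool) \<Rightarrow> ('v \<Rightarrow> int) \<Rightarrow> ('v \<Rightarrow> nat \<Rightarrow> int) \<Rightarrow> bool" where
  "symplectic_embedding V adj d phi \<longleftrightarrow>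
     (let n = card V in
       (\<forall>v\<in>V. in_lattice n (phi v)) \<and>
       (\<forall>v1\<in>V. \<forall>v2\<in>V. v1 \<noteq> v2 \<longrightarrow>
          Qn n (phi v1) (phi v2) = (if adj v1 v2 then 1 else 0)) \<and>
       (\<forall>v\<in>V. Qn n (phi v) (phi v) = d v) \<and>
       (\<forall>v\<in>V. Qn n (phi v) (Kn n) + Qn n (phi v) (phi v) = -2))"

definition in_S_with ::
  "'v set \<Rightarrow> ('v \<Rightarrow> 'v \<Rightarrow> bool) \<Rightarrow> ('v \<Rightarrow> int) \<Rightarrow> ('v \<Rightarrow> nat \<Rightarrow> int) \<Rightarrow> bool" where
  "in_S_with V adj d phi \<longleftrightarrow> is_tree V adj \<and> minimal_plumbing V d \<and>
     symplectic_embedding V adj d phi"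

end

theory Submission
  imports Defs
begin

lemma sum_fun_apply: "finite A \<Longrightarrow> (\<Sum>a\<in>A. (f a :: nat \<Rightarrow> int)) x = (\<Sum>a\<in>A. f a x)"
  by (induction A rule: finite_induct) auto

lemma sum_fun_apply': "(\<Sum>a\<in>A. (f a :: nat \<Rightarrow> int)) x = (\<Sum>a\<in>A. f a x)"
  by (cases "finite A") (auto simp: sum_fun_apply)

definition arcs :: "'v set \<Rightarrow> ('v \<Rightarrow> 'v \<Rightarrow> bool) \<Rightarrow> ('v \<times> 'v) set" where
  "arcs S adj = {(u, v). u \<in> S \<and> v \<in> S \<and> adj u v}"

lemma arcs_finite: "finite S \<Longrightarrow> finite (arcs S adj)"
  unfolding arcs_def by (rule finite_subset[of _ "S \<times> S"]) auto

lemma exit_edge: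
  assumes "(a, b) \<in> R\<^sup>*" "a \<in> S" "b \<notin> S"
  shows "\<exists>x y. x \<in> S \<and> y \<notin> S \<and> (x, y) \<in> R"
  using assms
proof (induction rule: rtrancl_induct)
  case base then show ?case by simp
next
  case (step y z)
  then show ?case by (cases "y \<in> S") auto
qed

lemma arcs_growth:
  assumes "finite U" "S \<subseteq> U" "connected_on S adj" "connected_on U adj"
    "\<forall>u v. adj u v \<longrightarrow> adj v u" "\<forall>v. \<not> adj v v"
  shows "card (arcs U adj) \<ge> card (arcs S adj) + 2 * (card U - card S)"
  using assms
proof (induction "card U - card S" arbitrary: S)
  case 0
  then have "card U \<le> card S" by simp
  then have "S = U" using 0 card_subset_eq[of U S] card_mono[of U S]
    by (meson card_seteq)
  then show ?case by simp
next
  case (Suc k)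
  have fS: "finite S" using Suc.prems finite_subset by blast
  have "S \<noteq> U" using Suc.hyps by auto
  then obtain u where u: "u \<in> U" "u \<notin> S" using Suc.prems by blast
  obtain s0 where s0: "s0 \<in> S" using Suc.prems unfolding connected_on_def by blast
  let ?RU = "{(x, y). x \<in> U \<and> y \<in> U \<and> adj x y}"
  have "(s0, u) \<in> ?RU\<^sup>*" using Suc.prems s0 u unfolding connected_on_def by blast
  then obtain s x where sx: "s \<in> S" "x \<notin> S" "(s, x) \<in> ?RU"
    using exit_edge[of s0 u ?RU S] s0 u by blast
  have xU: "x \<in> U" and adjsx: "adj s x" using sx by auto
  let ?S' = "insert x S"
  let ?RS = "{(x, y). x \<in> S \<and> y \<in> S \<and> adj x y}"
  let ?RS' = "{(y, z). y \<in> ?S' \<and> z \<in> ?S' \<and> adj y z}"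
  have mono: "?RS\<^sup>* \<subseteq> ?RS'\<^sup>*" by (rule rtrancl_mono) auto
  have e1: "(s, x) \<in> ?RS'" using sx adjsx by auto
  have e2: "(x, s) \<in> ?RS'" using sx adjsx Suc.prems(5) by auto
  have conn: "connected_on ?S' adj"
    unfolding connected_on_def
  proof (intro conjI ballI)
    show "?S' \<noteq> {}" by simp
  next
    fix p q assume p: "p \<in> ?S'" and q: "q \<in> ?S'"
    have inS: "\<And>a b. a \<in> S \<Longrightarrow> b \<in> S \<Longrightarrow> (a, b) \<in> ?RS'\<^sup>*"
      using Suc.prems(3) mono unfolding connected_on_def by blast
    have px: "\<And>a. a \<in> S \<Longrightarrow> (a, x) \<in> ?RS'\<^sup>*"
      using inS[OF _ sx(1)] e1 by (meson rtrancl.rtrancl_into_rtrancl)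
    have xq: "\<And>a. a \<in> S \<Longrightarrow> (x, a) \<in> ?RS'\<^sup>*"
      using inS[OF sx(1)] e2 by (meson converse_rtrancl_into_rtrancl)
    show "(p, q) \<in> ?RS'\<^sup>*"
      using p q inS px xq by auto
  qed
  have sub': "?S' \<subseteq> U" using Suc.prems xU by auto
  have cardS': "card ?S' = card S + 1" using fS sx by simp
  have k: "k = card U - card ?S'" using Suc.hyps cardS' by simp
  have IH: "card (arcs U adj) \<ge> card (arcs ?S' adj) + 2 * (card U - card ?S')"
    using Suc.hyps(1)[OF k Suc.prems(1) sub' conn Suc.prems(4-6)] by blast
  have sub2: "arcs S adj \<union> {(s, x), (x, s)} \<subseteq> arcs ?S' adj"
    using sx adjsx Suc.prems(5) unfolding arcs_def by auto
  have disj: "arcs S adj \<inter> {(s, x), (x, s)} = {}"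
    using sx unfolding arcs_def by auto
  have "s \<noteq> x" using sx by auto
  then have c2: "card {(s, x), (x, s)} = 2" by simp
  have "card (arcs S adj \<union> {(s, x), (x, s)}) = card (arcs S adj) + 2"
    using card_Un_disjoint[OF arcs_finite[OF fS] _ disj] c2 by simp
  moreover have "card (arcs S adj \<union> {(s, x), (x, s)}) \<le> card (arcs ?S' adj)"
    by (rule card_mono[OF arcs_finite sub2]) (use fS in simp)
  moreover have "card U \<ge> card ?S'" using sub' Suc.prems(1) card_mono by blast
  ultimately show ?case using IH cardS' by linarith
qed


lemma arcs_edges:
  assumes "finite S" "\<forall>u v. adj u v \<longrightarrow> adj v u" "\<forall>v. \<not> adj v v"
  shows "card (arcs S adj) = 2 * card (edges S adj)"
proof -
  let ?g = "\<lambda>p. {fst p, snd p}"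
  have fE: "finite (edges S adj)"
    by (rule finite_subset[of _ "Pow S"]) (auto simp: edges_def assms(1))
  have img: "?g ` arcs S adj \<subseteq> edges S adj"
    unfolding arcs_def edges_def by (auto, blast)
  have "(\<Sum>e\<in>edges S adj. card {p \<in> arcs S adj. ?g p = e}) = card (arcs S adj)"
    using sum.group[OF arcs_finite[OF assms(1)] fE img, of "\<lambda>_. (1::nat)"] by simp
  moreover have "\<And>e. e \<in> edges S adj \<Longrightarrow> card {p \<in> arcs S adj. ?g p = e} = 2"
  proof -
    fix e assume "e \<in> edges S adj"
    then obtain u v where uv: "e = {u, v}" "u \<in> S" "v \<in> S" "adj u v"
      unfolding edges_def by auto
    have ne: "u \<noteq> v" using uv assms(3) by auto
    have "{p \<in> arcs S adj. ?g p = e} = {(u, v), (v, u)}"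
      using uv assms(2) unfolding arcs_def by (auto simp: doubleton_eq_iff)
    then show "card {p \<in> arcs S adj. ?g p = e} = 2" using ne by simp
  qed
  ultimately show ?thesis by simp
qed

lemma int_cases2:
  fixes x :: int
  shows "x * (x + 1) \<ge> 0 \<and> (x * (x + 1) = 0 \<longleftrightarrow> x = 0 \<or> x = -1)
     \<and> (x * (x + 1) = 2 \<longleftrightarrow> x = 1 \<or> x = -2) \<and> (x * (x + 1) \<noteq> 0 \<longrightarrow> x * (x + 1) \<ge> 2)"
proof -
  consider "x \<ge> 2" | "x = 1" | "x = 0" | "x = -1" | "x = -2" | "x \<le> -3" by linarith
  then show ?thesis
  proof cases
    case 1
    then have "x * (x + 1) \<ge> 2 * 3" by (intro mult_mono) auto
    then show ?thesis using 1 by auto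
  next
    case 6
    then have "(-x) * (-x - 1) \<ge> 3 * 2" by (intro mult_mono) auto
    then show ?thesis using 6 by (auto simp: algebra_simps)
  qed auto
qed


lemma E_apply: "E a i = (if i = a then 1 else 0)"
  by (simp add: E_def)

lemma sumE_apply: "finite J \<Longrightarrow> (\<Sum>j\<in>J. E j) i = (if i \<in> J then 1 else 0)"
  by (simp add: sum_fun_apply E_def)

lemma form_lemma:
  fixes w :: "nat \<Rightarrow> int"
  assumes out: "\<forall>i. i \<notin> {1..n} \<longrightarrow> w i = 0"
    and s2: "(\<Sum>i\<in>{1..n}. w i * (w i + 1)) = 2"
  shows "\<exists>a\<in>{1..n}. \<exists>J\<subseteq>{1..n}. a \<notin> J \<and>
           (w = E a - (\<Sum>j\<in>J. E j) \<or> w = (\<lambda>i. - 2 * E a i) - (\<Sum>j\<in>J. E j))"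
proof -
  define P where "P = {i\<in>{1..n}. w i * (w i + 1) \<noteq> 0}"
  have fP: "finite P" unfolding P_def by simp
  have sP: "(\<Sum>i\<in>P. w i * (w i + 1)) = 2"
  proof -
    have "(\<Sum>i\<in>P. w i * (w i + 1)) = (\<Sum>i\<in>{1..n}. if w i * (w i + 1) \<noteq> 0 then w i * (w i + 1) else 0)"
      unfolding P_def by (rule sum.inter_filter) simp
    also have "\<dots> = (\<Sum>i\<in>{1..n}. w i * (w i + 1))" by (rule sum.cong) auto
    finally show ?thesis using s2 by simp
  qed
  have "(\<Sum>i\<in>P. (2::int)) \<le> (\<Sum>i\<in>P. w i * (w i + 1))"
    by (rule sum_mono) (use int_cases2 in \<open>auto simp: P_def\<close>)
  then have "2 * int (card P) \<le> 2" using sP by simp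
  then have c1: "card P \<le> 1" by simp
  have "P \<noteq> {}" using sP by auto
  then have "card P = 1" using c1 fP by (simp add: Suc_leI le_antisym card_gt_0_iff)
  then obtain a where Pa: "P = {a}" by (auto simp: card_Suc_eq)
  have aR: "a \<in> {1..n}" using Pa unfolding P_def by auto
  have wa: "w a = 1 \<or> w a = -2" using sP Pa int_cases2[of "w a"] by simp
  have others: "\<And>i. i \<in> {1..n} \<Longrightarrow> i \<noteq> a \<Longrightarrow> w i = 0 \<or> w i = -1"
  proof -
    fix i assume "i \<in> {1..n}" "i \<noteq> a"
    then have "i \<notin> P" using Pa by auto
    then have "w i * (w i + 1) = 0" using \<open>i \<in> {1..n}\<close> unfolding P_def by auto
    then show "w i = 0 \<or> w i = -1" using int_cases2[of "w i"] by simp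
  qed
  define J where "J = {i\<in>{1..n}. i \<noteq> a \<and> w i = -1}"
  have fJ: "finite J" unfolding J_def by simp
  have JR: "J \<subseteq> {1..n}" "a \<notin> J" unfolding J_def by auto
  have Jmem: "\<And>i. (i \<in> J) = (i \<in> {1..n} \<and> i \<noteq> a \<and> w i = -1)" unfolding J_def by simp
  have "w = E a - (\<Sum>j\<in>J. E j) \<or> w = (\<lambda>i. - 2 * E a i) - (\<Sum>j\<in>J. E j)"
    using wa
  proof
    assume "w a = 1"
    have "w = E a - (\<Sum>j\<in>J. E j)"
    proof
      fix i
      show "w i = (E a - (\<Sum>j\<in>J. E j)) i"
        using out others[of i] \<open>w a = 1\<close> aR
        by (cases "i \<in> {1..n}") (auto simp: sumE_apply[OF fJ] E_apply Jmem)
    qed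
    then show ?thesis by simp
  next
    assume "w a = -2"
    have "w = (\<lambda>i. - 2 * E a i) - (\<Sum>j\<in>J. E j)"
    proof
      fix i
      show "w i = ((\<lambda>i. - 2 * E a i) - (\<Sum>j\<in>J. E j)) i"
        using out others[of i] \<open>w a = -2\<close> aR
        by (cases "i \<in> {1..n}") (auto simp: sumE_apply[OF fJ] E_apply Jmem)
    qed
    then show ?thesis by simp
  qed
  then show ?thesis using aR JR by blast
qed


lemma Kn_apply: "Kn n i = (if i \<in> {1..n} then 1 else 0)"
  unfolding Kn_def by (simp add: sumE_apply)

theorem corollary3p2:
  fixes V :: "'v set" and adj :: "'v \<Rightarrow> 'v \<Rightarrow> bool" and d :: "'v \<Rightarrow> int"
    and phi :: "'v \<Rightarrow> nat \<Rightarrow> int" and S :: "'v set"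
  assumes "in_S_with V adj d phi"
    and "S \<subseteq> V" and "connected_on S adj"
  shows "\<exists>a\<in>{1..card V}. \<exists>J\<subseteq>{1..card V}. a \<notin> J \<and>
           ((\<Sum>v\<in>S. phi v) = E a - (\<Sum>j\<in>J. E j) \<or>
            (\<Sum>v\<in>S. phi v) = (\<lambda>i. - 2 * E a i) - (\<Sum>j\<in>J. E j))"
proof -
  define n where "n = card V"
  have tree: "is_tree V adj" and emb: "symplectic_embedding V adj d phi"
    using assms(1) unfolding in_S_with_def by auto
  have fV: "finite V" and sym: "\<forall>u v. adj u v \<longrightarrow> adj v u" and irr: "\<forall>v. \<not> adj v v"
    and cV: "connected_on V adj" and eV: "card (edges V adj) = card V - 1"
    using tree unfolding is_tree_def simple_graph_def by auto
  have lat: "\<And>v. v \<in> V \<Longrightarrow> in_lattice n (phi v)"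
    and Qoff: "\<And>u v. u \<in> V \<Longrightarrow> v \<in> V \<Longrightarrow> u \<noteq> v \<Longrightarrow> Qn n (phi u) (phi v) = (if adj u v then 1 else 0)"
    and Qd: "\<And>v. v \<in> V \<Longrightarrow> Qn n (phi v) (phi v) = d v"
    and QK: "\<And>v. v \<in> V \<Longrightarrow> Qn n (phi v) (Kn n) + Qn n (phi v) (phi v) = -2"
    using emb unfolding symplectic_embedding_def Let_def n_def by auto
  have fS: "finite S" using fV assms(2) finite_subset by blast
  obtain s where sS: "s \<in> S" using assms(3) unfolding connected_on_def by blast
  have Vne: "V \<noteq> {}" using cV unfolding connected_on_def by simp
  have cardV: "card V \<ge> 1" using fV Vne by (simp add: Suc_leI card_gt_0_iff)
  have cSV: "card S \<le> card V" using fV assms(2) card_mono by blast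
  have cS1: "card S \<ge> 1" using fS sS by (metis One_nat_def Suc_leI card_gt_0_iff empty_iff)
  have aV: "card (arcs V adj) = 2 * (card V - 1)"
    using arcs_edges[OF fV sym irr] eV by simp
  have g1: "card (arcs V adj) \<ge> card (arcs S adj) + 2 * (card V - card S)"
    by (rule arcs_growth[OF fV assms(2) assms(3) cV sym irr])
  have cs: "connected_on {s} adj" unfolding connected_on_def by auto
  have a0: "arcs {s} adj = {}" using irr unfolding arcs_def by auto
  have g2: "card (arcs S adj) \<ge> card (arcs {s} adj) + 2 * (card S - card {s})"
    by (rule arcs_growth[OF fS _ cs assms(3) sym irr]) (use sS in simp)
  have aS: "card (arcs S adj) = 2 * card S - 2"
    using g1 g2 aV a0 cSV cS1 cardV by simp
  define w where "w = (\<lambda>i. \<Sum>v\<in>S. phi v i)"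
  have wsum: "(\<Sum>v\<in>S. phi v) = w" unfolding w_def by (rule ext) (simp add: sum_fun_apply')
  have out: "\<forall>i. i \<notin> {1..n} \<longrightarrow> w i = 0"
  proof (intro allI impI)
    fix i assume i: "i \<notin> {1..n}"
    have "\<And>v. v \<in> S \<Longrightarrow> phi v i = 0"
      using lat assms(2) i unfolding in_lattice_def by blast
    then show "w i = 0" unfolding w_def by simp
  qed
  have sq: "(\<Sum>i\<in>{1..n}. w i * w i) = - (\<Sum>u\<in>S. \<Sum>v\<in>S. Qn n (phi u) (phi v))"
  proof -
    have "(\<Sum>i\<in>{1..n}. w i * w i) = (\<Sum>i\<in>{1..n}. \<Sum>u\<in>S. \<Sum>v\<in>S. phi u i * phi v i)"
      unfolding w_def by (simp add: sum_product)
    also have "\<dots> = (\<Sum>u\<in>S. \<Sum>v\<in>S. \<Sum>i\<in>{1..n}. phi u i * phi v i)"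
    proof -
      have "(\<Sum>i\<in>{1..n}. \<Sum>u\<in>S. \<Sum>v\<in>S. phi u i * phi v i) = (\<Sum>u\<in>S. \<Sum>i\<in>{1..n}. \<Sum>v\<in>S. phi u i * phi v i)"
        by (rule sum.swap)
      also have "\<dots> = (\<Sum>u\<in>S. \<Sum>v\<in>S. \<Sum>i\<in>{1..n}. phi u i * phi v i)"
        by (rule sum.cong[OF refl], rule sum.swap)
      finally show ?thesis .
    qed
    finally show ?thesis unfolding Qn_def by (simp add: sum_negf)
  qed
  have lin: "(\<Sum>i\<in>{1..n}. w i) = - (\<Sum>u\<in>S. Qn n (phi u) (Kn n))"
  proof -
    have "(\<Sum>i\<in>{1..n}. w i) = (\<Sum>u\<in>S. \<Sum>i\<in>{1..n}. phi u i)"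
      unfolding w_def by (rule sum.swap)
    also have "\<dots> = (\<Sum>u\<in>S. \<Sum>i\<in>{1..n}. phi u i * Kn n i)"
      by (simp add: Kn_apply)
    finally show ?thesis unfolding Qn_def by (simp add: sum_negf)
  qed
  have row: "\<And>u. u \<in> S \<Longrightarrow> (\<Sum>v\<in>S. Qn n (phi u) (phi v)) = d u + int (card {v\<in>S. adj u v})"
  proof -
    fix u assume uS: "u \<in> S"
    have "(\<Sum>v\<in>S. Qn n (phi u) (phi v)) =
          (\<Sum>v\<in>S. (if v = u then d u else 0) + (if adj u v then 1 else 0))"
    proof (rule sum.cong)
      fix v assume "v \<in> S"
      then have "u \<in> V" "v \<in> V" using uS assms(2) by auto
      then show "Qn n (phi u) (phi v) = (if v = u then d u else 0) + (if adj u v then 1 else 0)"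
        using Qoff[of u v] Qd[of u] irr by auto
    qed simp
    also have "\<dots> = d u + (\<Sum>v\<in>S. if adj u v then 1 else 0)"
      using uS fS by (simp add: sum.distrib)
    also have "(\<Sum>v\<in>S. if adj u v then 1 else (0::int)) = int (card {v\<in>S. adj u v})"
      using fS by (simp add: sum.If_cases Int_def)
    finally show "(\<Sum>v\<in>S. Qn n (phi u) (phi v)) = d u + int (card {v\<in>S. adj u v})" .
  qed
  have arcsSig: "arcs S adj = Sigma S (\<lambda>u. {v\<in>S. adj u v})" unfolding arcs_def by auto
  have cardarcs: "card (arcs S adj) = (\<Sum>u\<in>S. card {v\<in>S. adj u v})"
    unfolding arcsSig using fS by (simp add: card_SigmaI)
  have dbl: "(\<Sum>u\<in>S. \<Sum>v\<in>S. Qn n (phi u) (phi v)) = (\<Sum>u\<in>S. d u) + int (card (arcs S adj))"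
    using row cardarcs by (simp add: sum.distrib)
  have kk: "(\<Sum>u\<in>S. Qn n (phi u) (Kn n)) = (\<Sum>u\<in>S. -2 - d u)"
    using QK Qd assms(2) by (intro sum.cong) (auto simp: algebra_simps)
  have "(\<Sum>i\<in>{1..n}. w i * (w i + 1)) = (\<Sum>i\<in>{1..n}. w i * w i) + (\<Sum>i\<in>{1..n}. w i)"
    by (simp add: distrib_left sum.distrib)
  also have "\<dots> = 2 * int (card S) - int (card (arcs S adj))"
    using sq lin dbl kk by (simp add: sum_subtractf)
  also have "\<dots> = 2" using aS cS1 by simp
  finally have s2: "(\<Sum>i\<in>{1..n}. w i * (w i + 1)) = 2" .
  show ?thesis unfolding wsum n_def[symmetric] using form_lemma[OF out s2] .
qed

end
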